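(* Let $(H,G,\alpha,f)$ and $(H,G,\alpha',f')$ be normalized crossed systems, and write $g\triangleright' h:=\alpha'(g)(h)$. There is a bijection between the set of group homomorphisms $\psi:H\#_\alpha^f G\to H\#_{\alpha'}^{f'}G$ and the set of quadruples $(u,r,v,s)$, where $u:H\to H$, $r:G\to H$, $v:G\to G$ are maps and $s:H\to G$ is a group homomorphism, satisfying for all $g,g_1,g_2\in G$ and $h,h_1,h_2\in H$: (i) $v(g_1)v(g_2)=s(f(g_1,g_2))\,v(g_1g_2)$; (ii) $v(g)s(h)=s(g\triangleright h)\,v(g)$; (iii) $u(h_1h_2)=u(h_1)\big(s(h_1)\triangleright' u(h_2)\big)f'(s(h_1),s(h_2))$; (iv) $u(g\triangleright h)\big(s(g\triangleright h)\triangleright' r(g)\big)f'\big(s(g\triangleright h),v(g)\big)=r(g)\big(v(g)\triangleright' u(h)\big)f'(v(g),s(h))$; (v) $r(g_1)\big(v(g_1)\triangleright' r(g_2)\big)f'(v(g_1),v(g_2))=u(f(g_1,g_2))\big(s(f(g_1,g_2))\triangleright' r(g_1g_2)\big)f'\big(s(f(g_1,g_2)),v(g_1g_2)\big)$. Under this bijection, $\psi$ corresponds to $(u,r,v,s)$ via $$\psi(h,g)=(u(h),s(h))\cdot(r(g),v(g))=\Big(u(h)\big(s(h)\triangleright' r(g)\big)f'(s(h),v(g)),\ s(h)v(g)\Big),$$ and every such quadruple satisfies $u(1)=1$, $v(1)=1$, $r(1)=1$.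
   Context: For groups $H,G$ and a map $\alpha:G\to\mathrm{Aut}(H)$ write $g\triangleright h:=\alpha(g)(h)$. A normalized crossed system is a quadruple $(H,G,\alpha,f)$ with maps $\alpha:G\to\mathrm{Aut}(H)$, $f:G\times G\to H$, $f(1,1)=1$, such that for all $g_1,g_2,g_3\in G$, $h\in H$: (WA) $g_1\triangleright(g_2\triangleright h)=f(g_1,g_2)\big((g_1g_2)\triangleright h\big)f(g_1,g_2)^{-1}$ and (CC) $f(g_1,g_2)f(g_1g_2,g_3)=\big(g_1\triangleright f(g_2,g_3)\big)f(g_1,g_2g_3)$. The crossed product $H\#_\alpha^f G$ is the group on the set $H\times G$ with multiplication $(h_1,g_1)\cdot(h_2,g_2)=\big(h_1(g_1\triangleright h_2)f(g_1,g_2),g_1g_2\big)$ and unit $(1,1)$. *)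

theory Defs
  imports "HOL-Algebra.Group" "HOL-Library.FuncSet"
begin

text \<open>A normalized crossed system (H,G,alpha,f); alpha g h stands for g acting on h,
  f is written curried: f g1 g2 = f(g1,g2).\<close>
definition normalized_crossed_system ::
  "('h, 'x) monoid_scheme \<Rightarrow> ('g, 'y) monoid_scheme \<Rightarrow> ('g \<Rightarrow> 'h \<Rightarrow> 'h) \<Rightarrow> ('g \<Rightarrow> 'g \<Rightarrow> 'h) \<Rightarrow> bool"
where
  "normalized_crossed_system H G \<alpha> f \<longleftrightarrow>
     group H \<and> group G \<and>
     (\<forall>g\<in>carrier G. \<alpha> g \<in> iso H H) \<and>
     (\<forall>g1\<in>carrier G. \<forall>g2\<in>carrier G. f g1 g2 \<in> carrier H) \<and>
     f \<one>\<^bsub>G\<^esub> \<one>\<^bsub>G\<^esub> = \<one>\<^bsub>H\<^esub> \<and>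
     (\<forall>g1\<in>carrier G. \<forall>g2\<in>carrier G. \<forall>h\<in>carrier H.
        \<alpha> g1 (\<alpha> g2 h) = f g1 g2 \<otimes>\<^bsub>H\<^esub> \<alpha> (g1 \<otimes>\<^bsub>G\<^esub> g2) h \<otimes>\<^bsub>H\<^esub> inv\<^bsub>H\<^esub> (f g1 g2)) \<and>
     (\<forall>g1\<in>carrier G. \<forall>g2\<in>carrier G. \<forall>g3\<in>carrier G.
        f g1 g2 \<otimes>\<^bsub>H\<^esub> f (g1 \<otimes>\<^bsub>G\<^esub> g2) g3 = \<alpha> g1 (f g2 g3) \<otimes>\<^bsub>H\<^esub> f g1 (g2 \<otimes>\<^bsub>G\<^esub> g3))"

definition crossed_product ::
  "('h, 'x) monoid_scheme \<Rightarrow> ('g, 'y) monoid_scheme \<Rightarrow> ('g \<Rightarrow> 'h \<Rightarrow> 'h) \<Rightarrow> ('g \<Rightarrow> 'g \<Rightarrow> 'h) \<Rightarrow> ('h \<times> 'g) monoid"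
where
  "crossed_product H G \<alpha> f =
     \<lparr> carrier = carrier H \<times> carrier G,
       mult = (\<lambda>(h1, g1) (h2, g2). (h1 \<otimes>\<^bsub>H\<^esub> \<alpha> g1 h2 \<otimes>\<^bsub>H\<^esub> f g1 g2, g1 \<otimes>\<^bsub>G\<^esub> g2)),
       one = (\<one>\<^bsub>H\<^esub>, \<one>\<^bsub>G\<^esub>) \<rparr>"

text \<open>The quadruples (u,r,v,s) of the corollary: maps on the carriers (extensional, so
  that they are determined by their values on the carriers), s a group homomorphism,
  satisfying conditions (i)--(v).\<close>
definition crossed_quadruple ::
  "('h, 'x) monoid_scheme \<Rightarrow> ('g, 'y) monoid_scheme \<Rightarrow> ('g \<Rightarrow> 'h \<Rightarrow> 'h) \<Rightarrow> ('g \<Rightarrow> 'g \<Rightarrow> 'h)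
   \<Rightarrow> ('g \<Rightarrow> 'h \<Rightarrow> 'h) \<Rightarrow> ('g \<Rightarrow> 'g \<Rightarrow> 'h)
   \<Rightarrow> ('h \<Rightarrow> 'h) \<Rightarrow> ('g \<Rightarrow> 'h) \<Rightarrow> ('g \<Rightarrow> 'g) \<Rightarrow> ('h \<Rightarrow> 'g) \<Rightarrow> bool"
where
  "crossed_quadruple H G \<alpha> f \<alpha>' f' u r v s \<longleftrightarrow>
     u \<in> carrier H \<rightarrow>\<^sub>E carrier H \<and>
     r \<in> carrier G \<rightarrow>\<^sub>E carrier H \<and>
     v \<in> carrier G \<rightarrow>\<^sub>E carrier G \<and>
     s \<in> hom H G \<and> s \<in> extensional (carrier H) \<and>
     (\<forall>g1\<in>carrier G. \<forall>g2\<in>carrier G.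
        v g1 \<otimes>\<^bsub>G\<^esub> v g2 = s (f g1 g2) \<otimes>\<^bsub>G\<^esub> v (g1 \<otimes>\<^bsub>G\<^esub> g2)) \<and>
     (\<forall>g\<in>carrier G. \<forall>h\<in>carrier H.
        v g \<otimes>\<^bsub>G\<^esub> s h = s (\<alpha> g h) \<otimes>\<^bsub>G\<^esub> v g) \<and>
     (\<forall>h1\<in>carrier H. \<forall>h2\<in>carrier H.
        u (h1 \<otimes>\<^bsub>H\<^esub> h2) = u h1 \<otimes>\<^bsub>H\<^esub> \<alpha>' (s h1) (u h2) \<otimes>\<^bsub>H\<^esub> f' (s h1) (s h2)) \<and>
     (\<forall>g\<in>carrier G. \<forall>h\<in>carrier H.
        u (\<alpha> g h) \<otimes>\<^bsub>H\<^esub> \<alpha>' (s (\<alpha> g h)) (r g) \<otimes>\<^bsub>H\<^esub> f' (s (\<alpha> g h)) (v g)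
        = r g \<otimes>\<^bsub>H\<^esub> \<alpha>' (v g) (u h) \<otimes>\<^bsub>H\<^esub> f' (v g) (s h)) \<and>
     (\<forall>g1\<in>carrier G. \<forall>g2\<in>carrier G.
        r g1 \<otimes>\<^bsub>H\<^esub> \<alpha>' (v g1) (r g2) \<otimes>\<^bsub>H\<^esub> f' (v g1) (v g2)
        = u (f g1 g2) \<otimes>\<^bsub>H\<^esub> \<alpha>' (s (f g1 g2)) (r (g1 \<otimes>\<^bsub>G\<^esub> g2))
            \<otimes>\<^bsub>H\<^esub> f' (s (f g1 g2)) (v (g1 \<otimes>\<^bsub>G\<^esub> g2)))"

text \<open>The map sending a quadruple to psi(h,g) = (u h, s h) * (r g, v g) in the target crossed product.\<close>
definition quadruple_to_hom ::
  "('h, 'x) monoid_scheme \<Rightarrow> ('g, 'y) monoid_scheme \<Rightarrow> ('g \<Rightarrow> 'h \<Rightarrow> 'h) \<Rightarrow> ('g \<Rightarrow> 'g \<Rightarrow> 'h)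
   \<Rightarrow> ('h \<Rightarrow> 'h) \<times> ('g \<Rightarrow> 'h) \<times> ('g \<Rightarrow> 'g) \<times> ('h \<Rightarrow> 'g) \<Rightarrow> ('h \<times> 'g \<Rightarrow> 'h \<times> 'g)"
where
  "quadruple_to_hom H G \<alpha>' f' = (\<lambda>(u, r, v, s).
     restrict (\<lambda>(h, g). (u h \<otimes>\<^bsub>H\<^esub> \<alpha>' (s h) (r g) \<otimes>\<^bsub>H\<^esub> f' (s h) (v g), s h \<otimes>\<^bsub>G\<^esub> v g))
              (carrier H \<times> carrier G))"

end

theory Submission
  imports Defs
begin

lemma cp_mult [simp]:
  "(h1, g1) \<otimes>\<^bsub>crossed_product H G \<alpha> f\<^esub> (h2, g2) = (h1 \<otimes>\<^bsub>H\<^esub> \<alpha> g1 h2 \<otimes>\<^bsub>H\<^esub> f g1 g2, g1 \<otimes>\<^bsub>G\<^esub> g2)"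
  by (simp add: crossed_product_def)
lemma cp_carrier [simp]: "carrier (crossed_product H G \<alpha> f) = carrier H \<times> carrier G"
  by (simp add: crossed_product_def)
lemma cp_one [simp]: "\<one>\<^bsub>crossed_product H G \<alpha> f\<^esub> = (\<one>\<^bsub>H\<^esub>, \<one>\<^bsub>G\<^esub>)"
  by (simp add: crossed_product_def)

locale ncs =
  fixes H :: "'h monoid" and G :: "'g monoid" and \<alpha> :: "'g \<Rightarrow> 'h \<Rightarrow> 'h" and f :: "'g \<Rightarrow> 'g \<Rightarrow> 'h"
  assumes ncs: "normalized_crossed_system H G \<alpha> f"
begin

lemma grpH: "group H" and grpG: "group G" using ncs by (auto simp: normalized_crossed_system_def)

sublocale H: group H by (rule grpH)
sublocale G: group G by (rule grpG)

lemma iso: "g \<in> carrier G \<Longrightarrow> \<alpha> g \<in> iso H H" using ncs by (auto simp: normalized_crossed_system_def)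
lemma f_closed [simp]: "g1 \<in> carrier G \<Longrightarrow> g2 \<in> carrier G \<Longrightarrow> f g1 g2 \<in> carrier H"
  using ncs by (auto simp: normalized_crossed_system_def)
lemma f11 [simp]: "f \<one>\<^bsub>G\<^esub> \<one>\<^bsub>G\<^esub> = \<one>\<^bsub>H\<^esub>" using ncs by (auto simp: normalized_crossed_system_def)
lemma WA: "g1 \<in> carrier G \<Longrightarrow> g2 \<in> carrier G \<Longrightarrow> h \<in> carrier H \<Longrightarrow>
  \<alpha> g1 (\<alpha> g2 h) = f g1 g2 \<otimes>\<^bsub>H\<^esub> \<alpha> (g1 \<otimes>\<^bsub>G\<^esub> g2) h \<otimes>\<^bsub>H\<^esub> inv\<^bsub>H\<^esub> (f g1 g2)"
  using ncs by (auto simp: normalized_crossed_system_def)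
lemma CC: "g1 \<in> carrier G \<Longrightarrow> g2 \<in> carrier G \<Longrightarrow> g3 \<in> carrier G \<Longrightarrow>
  f g1 g2 \<otimes>\<^bsub>H\<^esub> f (g1 \<otimes>\<^bsub>G\<^esub> g2) g3 = \<alpha> g1 (f g2 g3) \<otimes>\<^bsub>H\<^esub> f g1 (g2 \<otimes>\<^bsub>G\<^esub> g3)"
  using ncs by (auto simp: normalized_crossed_system_def)

lemma ghom: "g \<in> carrier G \<Longrightarrow> group_hom H H (\<alpha> g)"
  using iso by (simp add: group_hom_def group_hom_axioms_def iso_def grpH)

lemma a_closed [simp]: "g \<in> carrier G \<Longrightarrow> h \<in> carrier H \<Longrightarrow> \<alpha> g h \<in> carrier H"
  using group_hom.hom_closed[OF ghom] by blast
lemma a_mult [simp]: "g \<in> carrier G \<Longrightarrow> h1 \<in> carrier H \<Longrightarrow> h2 \<in> carrier H \<Longrightarrow>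
   \<alpha> g (h1 \<otimes>\<^bsub>H\<^esub> h2) = \<alpha> g h1 \<otimes>\<^bsub>H\<^esub> \<alpha> g h2"
  using group_hom.hom_mult[OF ghom] by blast
lemma a_one [simp]: "g \<in> carrier G \<Longrightarrow> \<alpha> g \<one>\<^bsub>H\<^esub> = \<one>\<^bsub>H\<^esub>"
  using group_hom.hom_one[OF ghom] by blast
lemma a_inj: "g \<in> carrier G \<Longrightarrow> x \<in> carrier H \<Longrightarrow> y \<in> carrier H \<Longrightarrow> \<alpha> g x = \<alpha> g y \<Longrightarrow> x = y"
  using iso by (auto simp: iso_def bij_betw_def inj_on_def)

lemma f1g [simp]: assumes g: "g \<in> carrier G" shows "f \<one>\<^bsub>G\<^esub> g = \<one>\<^bsub>H\<^esub>"
proof -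
  have "f \<one>\<^bsub>G\<^esub> \<one>\<^bsub>G\<^esub> \<otimes>\<^bsub>H\<^esub> f (\<one>\<^bsub>G\<^esub> \<otimes>\<^bsub>G\<^esub> \<one>\<^bsub>G\<^esub>) g = \<alpha> \<one>\<^bsub>G\<^esub> (f \<one>\<^bsub>G\<^esub> g) \<otimes>\<^bsub>H\<^esub> f \<one>\<^bsub>G\<^esub> (\<one>\<^bsub>G\<^esub> \<otimes>\<^bsub>G\<^esub> g)"
    by (rule CC) (simp_all add: g)
  hence "\<one>\<^bsub>H\<^esub> \<otimes>\<^bsub>H\<^esub> f \<one>\<^bsub>G\<^esub> g = \<alpha> \<one>\<^bsub>G\<^esub> (f \<one>\<^bsub>G\<^esub> g) \<otimes>\<^bsub>H\<^esub> f \<one>\<^bsub>G\<^esub> g"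
    by (simp only: G.l_one[OF G.one_closed] G.l_one[OF g] f11)
  hence "\<one>\<^bsub>H\<^esub> = \<alpha> \<one>\<^bsub>G\<^esub> (f \<one>\<^bsub>G\<^esub> g)"
    using H.right_cancel[of "f \<one>\<^bsub>G\<^esub> g" "\<one>\<^bsub>H\<^esub>" "\<alpha> \<one>\<^bsub>G\<^esub> (f \<one>\<^bsub>G\<^esub> g)"] g by simp
  hence "\<alpha> \<one>\<^bsub>G\<^esub> (f \<one>\<^bsub>G\<^esub> g) = \<alpha> \<one>\<^bsub>G\<^esub> \<one>\<^bsub>H\<^esub>" using a_one[OF G.one_closed] by metis
  thus ?thesis using a_inj[OF G.one_closed f_closed[OF G.one_closed g] H.one_closed] by simp
qed

lemma fg1 [simp]: assumes g: "g \<in> carrier G" shows "f g \<one>\<^bsub>G\<^esub> = \<one>\<^bsub>H\<^esub>"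
proof -
  have "f g \<one>\<^bsub>G\<^esub> \<otimes>\<^bsub>H\<^esub> f (g \<otimes>\<^bsub>G\<^esub> \<one>\<^bsub>G\<^esub>) \<one>\<^bsub>G\<^esub> = \<alpha> g (f \<one>\<^bsub>G\<^esub> \<one>\<^bsub>G\<^esub>) \<otimes>\<^bsub>H\<^esub> f g (\<one>\<^bsub>G\<^esub> \<otimes>\<^bsub>G\<^esub> \<one>\<^bsub>G\<^esub>)"
    by (rule CC) (simp_all add: g)
  hence "f g \<one>\<^bsub>G\<^esub> \<otimes>\<^bsub>H\<^esub> f g \<one>\<^bsub>G\<^esub> = \<one>\<^bsub>H\<^esub> \<otimes>\<^bsub>H\<^esub> f g \<one>\<^bsub>G\<^esub>"
    by (simp only: G.r_one[OF G.one_closed] G.r_one[OF g] f11 a_one[OF g])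
  thus ?thesis using g H.right_cancel[of "f g \<one>\<^bsub>G\<^esub>" "f g \<one>\<^bsub>G\<^esub>" "\<one>\<^bsub>H\<^esub>"] by simp
qed

lemma a1 [simp]: assumes h: "h \<in> carrier H" shows "\<alpha> \<one>\<^bsub>G\<^esub> h = h"
proof -
  have "\<alpha> \<one>\<^bsub>G\<^esub> (\<alpha> \<one>\<^bsub>G\<^esub> h) = f \<one>\<^bsub>G\<^esub> \<one>\<^bsub>G\<^esub> \<otimes>\<^bsub>H\<^esub> \<alpha> (\<one>\<^bsub>G\<^esub> \<otimes>\<^bsub>G\<^esub> \<one>\<^bsub>G\<^esub>) h \<otimes>\<^bsub>H\<^esub> inv\<^bsub>H\<^esub> (f \<one>\<^bsub>G\<^esub> \<one>\<^bsub>G\<^esub>)"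
    by (rule WA) (simp_all add: h)
  hence "\<alpha> \<one>\<^bsub>G\<^esub> (\<alpha> \<one>\<^bsub>G\<^esub> h) = \<alpha> \<one>\<^bsub>G\<^esub> h" using h by simp
  thus ?thesis using a_inj[OF G.one_closed a_closed[OF G.one_closed h] h] by simp
qed

lemma assoc: assumes "h1 \<in> carrier H" "h2 \<in> carrier H" "h3 \<in> carrier H"
  "g1 \<in> carrier G" "g2 \<in> carrier G" "g3 \<in> carrier G"
shows "h1 \<otimes>\<^bsub>H\<^esub> \<alpha> g1 h2 \<otimes>\<^bsub>H\<^esub> f g1 g2 \<otimes>\<^bsub>H\<^esub> \<alpha> (g1 \<otimes>\<^bsub>G\<^esub> g2) h3 \<otimes>\<^bsub>H\<^esub> f (g1 \<otimes>\<^bsub>G\<^esub> g2) g3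
  = h1 \<otimes>\<^bsub>H\<^esub> \<alpha> g1 (h2 \<otimes>\<^bsub>H\<^esub> \<alpha> g2 h3 \<otimes>\<^bsub>H\<^esub> f g2 g3) \<otimes>\<^bsub>H\<^esub> f g1 (g2 \<otimes>\<^bsub>G\<^esub> g3)"
proof -
  note c = assms
  have "h1 \<otimes>\<^bsub>H\<^esub> \<alpha> g1 (h2 \<otimes>\<^bsub>H\<^esub> \<alpha> g2 h3 \<otimes>\<^bsub>H\<^esub> f g2 g3) \<otimes>\<^bsub>H\<^esub> f g1 (g2 \<otimes>\<^bsub>G\<^esub> g3)
     = h1 \<otimes>\<^bsub>H\<^esub> (\<alpha> g1 h2 \<otimes>\<^bsub>H\<^esub> (\<alpha> g1 (\<alpha> g2 h3) \<otimes>\<^bsub>H\<^esub> (\<alpha> g1 (f g2 g3) \<otimes>\<^bsub>H\<^esub> f g1 (g2 \<otimes>\<^bsub>G\<^esub> g3))))"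
    using c by (simp add: H.m_assoc)
  also have "\<dots> = h1 \<otimes>\<^bsub>H\<^esub> (\<alpha> g1 h2 \<otimes>\<^bsub>H\<^esub> ((f g1 g2 \<otimes>\<^bsub>H\<^esub> \<alpha> (g1 \<otimes>\<^bsub>G\<^esub> g2) h3 \<otimes>\<^bsub>H\<^esub> inv\<^bsub>H\<^esub> (f g1 g2)) \<otimes>\<^bsub>H\<^esub> (f g1 g2 \<otimes>\<^bsub>H\<^esub> f (g1 \<otimes>\<^bsub>G\<^esub> g2) g3)))"
    using c by (simp add: WA CC)
  also have "\<dots> = h1 \<otimes>\<^bsub>H\<^esub> \<alpha> g1 h2 \<otimes>\<^bsub>H\<^esub> f g1 g2 \<otimes>\<^bsub>H\<^esub> \<alpha> (g1 \<otimes>\<^bsub>G\<^esub> g2) h3 \<otimes>\<^bsub>H\<^esub> (inv\<^bsub>H\<^esub> (f g1 g2) \<otimes>\<^bsub>H\<^esub> f g1 g2) \<otimes>\<^bsub>H\<^esub> f (g1 \<otimes>\<^bsub>G\<^esub> g2) g3"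
    using c by (simp add: H.m_assoc H.inv_solve_left' del: H.l_inv)
  finally show ?thesis using c by simp
qed

lemma monoid_cp: "monoid (crossed_product H G \<alpha> f)"
proof (rule monoidI)
  fix x y z assume "x \<in> carrier (crossed_product H G \<alpha> f)" "y \<in> carrier (crossed_product H G \<alpha> f)"
    "z \<in> carrier (crossed_product H G \<alpha> f)"
  then obtain h1 g1 h2 g2 h3 g3 where xyz: "x = (h1,g1)" "y = (h2,g2)" "z = (h3,g3)"
    and c: "h1 \<in> carrier H" "h2 \<in> carrier H" "h3 \<in> carrier H" "g1 \<in> carrier G" "g2 \<in> carrier G" "g3 \<in> carrier G"
    by auto
  show "x \<otimes>\<^bsub>crossed_product H G \<alpha> f\<^esub> y \<otimes>\<^bsub>crossed_product H G \<alpha> f\<^esub> z =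
        x \<otimes>\<^bsub>crossed_product H G \<alpha> f\<^esub> (y \<otimes>\<^bsub>crossed_product H G \<alpha> f\<^esub> z)"
    using assoc[OF c] c by (simp add: xyz G.m_assoc)
qed auto

end

lemma grp_idem: "group K \<Longrightarrow> x \<in> carrier K \<Longrightarrow> x \<otimes>\<^bsub>K\<^esub> x = x \<Longrightarrow> x = \<one>\<^bsub>K\<^esub>"
  by (metis group.r_inv monoid.m_assoc group.is_monoid group.inv_closed monoid.r_one)

locale two = S: ncs H G \<alpha> f + T: ncs H G \<alpha>' f' for H G \<alpha> f \<alpha>' f'
begin

abbreviation "C \<equiv> crossed_product H G \<alpha> f"
abbreviation "C' \<equiv> crossed_product H G \<alpha>' f'"
abbreviation "F \<equiv> quadruple_to_hom H G \<alpha>' f'"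

lemma F_app: "h \<in> carrier H \<Longrightarrow> g \<in> carrier G \<Longrightarrow>
  F (u, r, v, s) (h, g) = (u h \<otimes>\<^bsub>H\<^esub> \<alpha>' (s h) (r g) \<otimes>\<^bsub>H\<^esub> f' (s h) (v g), s h \<otimes>\<^bsub>G\<^esub> v g)"
  by (simp add: quadruple_to_hom_def)

lemma F_ext: "F q \<in> extensional (carrier H \<times> carrier G)"
  by (cases q) (auto simp: quadruple_to_hom_def)

context
  fixes u r v s
  assumes q: "crossed_quadruple H G \<alpha> f \<alpha>' f' u r v s"
begin

lemma uP: "u \<in> carrier H \<rightarrow>\<^sub>E carrier H" and rP: "r \<in> carrier G \<rightarrow>\<^sub>E carrier H"
  and vP: "v \<in> carrier G \<rightarrow>\<^sub>E carrier G" and sh: "s \<in> hom H G" and se: "s \<in> extensional (carrier H)"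
  using q unfolding crossed_quadruple_def by auto

lemma c1: "g1 \<in> carrier G \<Longrightarrow> g2 \<in> carrier G \<Longrightarrow>
        v g1 \<otimes>\<^bsub>G\<^esub> v g2 = s (f g1 g2) \<otimes>\<^bsub>G\<^esub> v (g1 \<otimes>\<^bsub>G\<^esub> g2)"
  using q unfolding crossed_quadruple_def by auto
lemma c2: "g \<in> carrier G \<Longrightarrow> h \<in> carrier H \<Longrightarrow>
        v g \<otimes>\<^bsub>G\<^esub> s h = s (\<alpha> g h) \<otimes>\<^bsub>G\<^esub> v g"
  using q unfolding crossed_quadruple_def by auto
lemma c3: "h1 \<in> carrier H \<Longrightarrow> h2 \<in> carrier H \<Longrightarrow>
        u (h1 \<otimes>\<^bsub>H\<^esub> h2) = u h1 \<otimes>\<^bsub>H\<^esub> \<alpha>' (s h1) (u h2) \<otimes>\<^bsub>H\<^esub> f' (s h1) (s h2)"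
  using q unfolding crossed_quadruple_def by auto
lemma c4: "g \<in> carrier G \<Longrightarrow> h \<in> carrier H \<Longrightarrow>
        u (\<alpha> g h) \<otimes>\<^bsub>H\<^esub> \<alpha>' (s (\<alpha> g h)) (r g) \<otimes>\<^bsub>H\<^esub> f' (s (\<alpha> g h)) (v g)
        = r g \<otimes>\<^bsub>H\<^esub> \<alpha>' (v g) (u h) \<otimes>\<^bsub>H\<^esub> f' (v g) (s h)"
  using q unfolding crossed_quadruple_def by auto
lemma c5: "g1 \<in> carrier G \<Longrightarrow> g2 \<in> carrier G \<Longrightarrow>
        r g1 \<otimes>\<^bsub>H\<^esub> \<alpha>' (v g1) (r g2) \<otimes>\<^bsub>H\<^esub> f' (v g1) (v g2)
        = u (f g1 g2) \<otimes>\<^bsub>H\<^esub> \<alpha>' (s (f g1 g2)) (r (g1 \<otimes>\<^bsub>G\<^esub> g2))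
            \<otimes>\<^bsub>H\<^esub> f' (s (f g1 g2)) (v (g1 \<otimes>\<^bsub>G\<^esub> g2))"
  using q unfolding crossed_quadruple_def by auto

lemma uc [simp]: "h \<in> carrier H \<Longrightarrow> u h \<in> carrier H" using uP by auto
lemma rc [simp]: "g \<in> carrier G \<Longrightarrow> r g \<in> carrier H" using rP by auto
lemma vc [simp]: "g \<in> carrier G \<Longrightarrow> v g \<in> carrier G" using vP by auto
lemma sc [simp]: "h \<in> carrier H \<Longrightarrow> s h \<in> carrier G" using sh by (auto simp: hom_def)
lemma smult [simp]: "h1 \<in> carrier H \<Longrightarrow> h2 \<in> carrier H \<Longrightarrow> s (h1 \<otimes>\<^bsub>H\<^esub> h2) = s h1 \<otimes>\<^bsub>G\<^esub> s h2"
  using sh by (auto simp: hom_def)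
lemma s1 [simp]: "s \<one>\<^bsub>H\<^esub> = \<one>\<^bsub>G\<^esub>"
  using hom_one[OF sh S.grpH S.grpG] .

lemma u1 [simp]: "u \<one>\<^bsub>H\<^esub> = \<one>\<^bsub>H\<^esub>"
proof -
  have "u \<one>\<^bsub>H\<^esub> \<otimes>\<^bsub>H\<^esub> u \<one>\<^bsub>H\<^esub> = u \<one>\<^bsub>H\<^esub>"
    using c3[of "\<one>\<^bsub>H\<^esub>" "\<one>\<^bsub>H\<^esub>", symmetric] by simp
  thus ?thesis using grp_idem[OF S.grpH] by simp
qed

lemma v1 [simp]: "v \<one>\<^bsub>G\<^esub> = \<one>\<^bsub>G\<^esub>"
proof -
  have "v \<one>\<^bsub>G\<^esub> \<otimes>\<^bsub>G\<^esub> v \<one>\<^bsub>G\<^esub> = v \<one>\<^bsub>G\<^esub>"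
    using c1[of "\<one>\<^bsub>G\<^esub>" "\<one>\<^bsub>G\<^esub>"] by simp
  thus ?thesis using grp_idem[OF S.grpG] by simp
qed

lemma r1 [simp]: "r \<one>\<^bsub>G\<^esub> = \<one>\<^bsub>H\<^esub>"
proof -
  have "r \<one>\<^bsub>G\<^esub> \<otimes>\<^bsub>H\<^esub> r \<one>\<^bsub>G\<^esub> = r \<one>\<^bsub>G\<^esub>"
    using c5[of "\<one>\<^bsub>G\<^esub>" "\<one>\<^bsub>G\<^esub>"] by simp
  thus ?thesis using grp_idem[OF S.grpH] by simp
qed

lemma F_h1: "h \<in> carrier H \<Longrightarrow> F (u, r, v, s) (h, \<one>\<^bsub>G\<^esub>) = (u h, s h)"
  by (simp add: F_app)
lemma F_1g: "g \<in> carrier G \<Longrightarrow> F (u, r, v, s) (\<one>\<^bsub>H\<^esub>, g) = (r g, v g)"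
  by (simp add: F_app)

lemma quad_hom: "F (u, r, v, s) \<in> hom C C'"
proof -
  interpret M: monoid C' by (rule T.monoid_cp)
  define P where "P h = (u h, s h)" for h
  define Q where "Q g = (r g, v g)" for g
  have Pc: "P h \<in> carrier H \<times> carrier G" if "h \<in> carrier H" for h using that by (simp add: P_def)
  have Qc: "Q g \<in> carrier H \<times> carrier G" if "g \<in> carrier G" for g using that by (simp add: Q_def)
  have Pc': "P h \<in> carrier C'" if "h \<in> carrier H" for h using Pc[OF that] by simp
  have Qc': "Q g \<in> carrier C'" if "g \<in> carrier G" for g using Qc[OF that] by simp
  have Fe: "F (u, r, v, s) (h, g) = P h \<otimes>\<^bsub>C'\<^esub> Q g" if "h \<in> carrier H" "g \<in> carrier G" for h g
    using that by (simp add: F_app P_def Q_def)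
  have PP: "P h1 \<otimes>\<^bsub>C'\<^esub> P h2 = P (h1 \<otimes>\<^bsub>H\<^esub> h2)" if "h1 \<in> carrier H" "h2 \<in> carrier H" for h1 h2
    using that c3 by (simp add: P_def)
  have QP: "Q g \<otimes>\<^bsub>C'\<^esub> P h = P (\<alpha> g h) \<otimes>\<^bsub>C'\<^esub> Q g" if "g \<in> carrier G" "h \<in> carrier H" for g h
    using that c2 c4 by (simp add: P_def Q_def)
  have QQ: "Q g1 \<otimes>\<^bsub>C'\<^esub> Q g2 = P (f g1 g2) \<otimes>\<^bsub>C'\<^esub> Q (g1 \<otimes>\<^bsub>G\<^esub> g2)" if "g1 \<in> carrier G" "g2 \<in> carrier G" for g1 g2
    using that c1 c5 by (simp add: P_def Q_def)
  show ?thesis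
  proof (rule homI)
    fix x assume "x \<in> carrier C"
    then obtain h g where x: "x = (h, g)" "h \<in> carrier H" "g \<in> carrier G" by auto
    show "F (u, r, v, s) x \<in> carrier C'" using x by (simp add: F_app)
  next
    fix x y assume "x \<in> carrier C" "y \<in> carrier C"
    then obtain h1 g1 h2 g2 where x: "x = (h1, g1)" "y = (h2, g2)" and c: "h1 \<in> carrier H" "g1 \<in> carrier G"
      "h2 \<in> carrier H" "g2 \<in> carrier G" by auto
    have "F (u, r, v, s) (x \<otimes>\<^bsub>C\<^esub> y) = P (h1 \<otimes>\<^bsub>H\<^esub> \<alpha> g1 h2 \<otimes>\<^bsub>H\<^esub> f g1 g2) \<otimes>\<^bsub>C'\<^esub> Q (g1 \<otimes>\<^bsub>G\<^esub> g2)"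
      using c by (simp add: x Fe)
    also have "\<dots> = P h1 \<otimes>\<^bsub>C'\<^esub> P (\<alpha> g1 h2) \<otimes>\<^bsub>C'\<^esub> P (f g1 g2) \<otimes>\<^bsub>C'\<^esub> Q (g1 \<otimes>\<^bsub>G\<^esub> g2)"
      using c by (simp add: PP)
    also have "\<dots> = P h1 \<otimes>\<^bsub>C'\<^esub> P (\<alpha> g1 h2) \<otimes>\<^bsub>C'\<^esub> (P (f g1 g2) \<otimes>\<^bsub>C'\<^esub> Q (g1 \<otimes>\<^bsub>G\<^esub> g2))"
      using c by (simp add: M.m_assoc Pc' Qc' del: cp_carrier)
    also have "\<dots> = P h1 \<otimes>\<^bsub>C'\<^esub> P (\<alpha> g1 h2) \<otimes>\<^bsub>C'\<^esub> (Q g1 \<otimes>\<^bsub>C'\<^esub> Q g2)"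
      using c by (simp add: QQ)
    also have "\<dots> = P h1 \<otimes>\<^bsub>C'\<^esub> (P (\<alpha> g1 h2) \<otimes>\<^bsub>C'\<^esub> Q g1) \<otimes>\<^bsub>C'\<^esub> Q g2"
      using c by (simp add: M.m_assoc Pc' Qc' del: cp_carrier)
    also have "\<dots> = P h1 \<otimes>\<^bsub>C'\<^esub> (Q g1 \<otimes>\<^bsub>C'\<^esub> P h2) \<otimes>\<^bsub>C'\<^esub> Q g2"
      using c by (simp add: QP)
    also have "\<dots> = (P h1 \<otimes>\<^bsub>C'\<^esub> Q g1) \<otimes>\<^bsub>C'\<^esub> (P h2 \<otimes>\<^bsub>C'\<^esub> Q g2)"
      using c by (simp add: M.m_assoc Pc' Qc' del: cp_carrier)
    also have "\<dots> = F (u, r, v, s) x \<otimes>\<^bsub>C'\<^esub> F (u, r, v, s) y"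
      using c by (simp add: x Fe)
    finally show "F (u, r, v, s) (x \<otimes>\<^bsub>C\<^esub> y) = F (u, r, v, s) x \<otimes>\<^bsub>C'\<^esub> F (u, r, v, s) y" .
  qed
qed

end


lemma hom_quad:
  assumes psi: "\<psi> \<in> hom C C'" "\<psi> \<in> extensional (carrier H \<times> carrier G)"
  defines "u \<equiv> restrict (\<lambda>h. fst (\<psi> (h, \<one>\<^bsub>G\<^esub>))) (carrier H)"
    and "r \<equiv> restrict (\<lambda>g. fst (\<psi> (\<one>\<^bsub>H\<^esub>, g))) (carrier G)"
    and "v \<equiv> restrict (\<lambda>g. snd (\<psi> (\<one>\<^bsub>H\<^esub>, g))) (carrier G)"
    and "s \<equiv> restrict (\<lambda>h. snd (\<psi> (h, \<one>\<^bsub>G\<^esub>))) (carrier H)"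
  shows "crossed_quadruple H G \<alpha> f \<alpha>' f' u r v s \<and> F (u, r, v, s) = \<psi>"
proof -
  have pc: "\<psi> x \<in> carrier H \<times> carrier G" if "x \<in> carrier H \<times> carrier G" for x
    using psi(1) that by (auto simp: hom_def)
  have hm: "\<psi> (x \<otimes>\<^bsub>C\<^esub> y) = \<psi> x \<otimes>\<^bsub>C'\<^esub> \<psi> y" if "x \<in> carrier H \<times> carrier G" "y \<in> carrier H \<times> carrier G" for x y
    using psi(1) that by (auto simp: hom_def)
  have Pe: "\<psi> (h, \<one>\<^bsub>G\<^esub>) = (u h, s h)" if "h \<in> carrier H" for h
    using that by (simp add: u_def s_def)
  have Qe: "\<psi> (\<one>\<^bsub>H\<^esub>, g) = (r g, v g)" if "g \<in> carrier G" for g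
    using that by (simp add: r_def v_def)
  have uc [simp]: "u h \<in> carrier H" and sc [simp]: "s h \<in> carrier G" if "h \<in> carrier H" for h
    using pc[of "(h, \<one>\<^bsub>G\<^esub>)"] that Pe[OF that] by auto
  have rc [simp]: "r g \<in> carrier H" and vc [simp]: "v g \<in> carrier G" if "g \<in> carrier G" for g
    using pc[of "(\<one>\<^bsub>H\<^esub>, g)"] that Qe[OF that] by auto
  have e3: "u (h1 \<otimes>\<^bsub>H\<^esub> h2) = u h1 \<otimes>\<^bsub>H\<^esub> \<alpha>' (s h1) (u h2) \<otimes>\<^bsub>H\<^esub> f' (s h1) (s h2)
      \<and> s (h1 \<otimes>\<^bsub>H\<^esub> h2) = s h1 \<otimes>\<^bsub>G\<^esub> s h2" if "h1 \<in> carrier H" "h2 \<in> carrier H" for h1 h2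
  proof -
    have "\<psi> ((h1, \<one>\<^bsub>G\<^esub>) \<otimes>\<^bsub>C\<^esub> (h2, \<one>\<^bsub>G\<^esub>)) = \<psi> (h1, \<one>\<^bsub>G\<^esub>) \<otimes>\<^bsub>C'\<^esub> \<psi> (h2, \<one>\<^bsub>G\<^esub>)"
      using that by (intro hm) auto
    thus ?thesis using that by (simp add: Pe)
  qed
  have e24: "r g \<otimes>\<^bsub>H\<^esub> \<alpha>' (v g) (u h) \<otimes>\<^bsub>H\<^esub> f' (v g) (s h) =
      u (\<alpha> g h) \<otimes>\<^bsub>H\<^esub> \<alpha>' (s (\<alpha> g h)) (r g) \<otimes>\<^bsub>H\<^esub> f' (s (\<alpha> g h)) (v g)
      \<and> v g \<otimes>\<^bsub>G\<^esub> s h = s (\<alpha> g h) \<otimes>\<^bsub>G\<^esub> v g" if "g \<in> carrier G" "h \<in> carrier H" for g h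
  proof -
    have 1: "\<psi> ((\<one>\<^bsub>H\<^esub>, g) \<otimes>\<^bsub>C\<^esub> (h, \<one>\<^bsub>G\<^esub>)) = \<psi> (\<one>\<^bsub>H\<^esub>, g) \<otimes>\<^bsub>C'\<^esub> \<psi> (h, \<one>\<^bsub>G\<^esub>)"
      using that by (intro hm) auto
    have 2: "\<psi> ((\<alpha> g h, \<one>\<^bsub>G\<^esub>) \<otimes>\<^bsub>C\<^esub> (\<one>\<^bsub>H\<^esub>, g)) = \<psi> (\<alpha> g h, \<one>\<^bsub>G\<^esub>) \<otimes>\<^bsub>C'\<^esub> \<psi> (\<one>\<^bsub>H\<^esub>, g)"
      using that by (intro hm) auto
    have A: "\<psi> (\<alpha> g h, g) = (r g \<otimes>\<^bsub>H\<^esub> \<alpha>' (v g) (u h) \<otimes>\<^bsub>H\<^esub> f' (v g) (s h), v g \<otimes>\<^bsub>G\<^esub> s h)"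
      using 1 that by (simp add: Pe Qe)
    have B: "\<psi> (\<alpha> g h, g) = (u (\<alpha> g h) \<otimes>\<^bsub>H\<^esub> \<alpha>' (s (\<alpha> g h)) (r g) \<otimes>\<^bsub>H\<^esub> f' (s (\<alpha> g h)) (v g), s (\<alpha> g h) \<otimes>\<^bsub>G\<^esub> v g)"
      using 2 that by (simp add: Pe Qe)
    show ?thesis using trans[OF A[symmetric] B] by simp
  qed
  have e15: "r g1 \<otimes>\<^bsub>H\<^esub> \<alpha>' (v g1) (r g2) \<otimes>\<^bsub>H\<^esub> f' (v g1) (v g2)
        = u (f g1 g2) \<otimes>\<^bsub>H\<^esub> \<alpha>' (s (f g1 g2)) (r (g1 \<otimes>\<^bsub>G\<^esub> g2))
            \<otimes>\<^bsub>H\<^esub> f' (s (f g1 g2)) (v (g1 \<otimes>\<^bsub>G\<^esub> g2))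
      \<and> v g1 \<otimes>\<^bsub>G\<^esub> v g2 = s (f g1 g2) \<otimes>\<^bsub>G\<^esub> v (g1 \<otimes>\<^bsub>G\<^esub> g2)" if "g1 \<in> carrier G" "g2 \<in> carrier G" for g1 g2
  proof -
    have 1: "\<psi> ((\<one>\<^bsub>H\<^esub>, g1) \<otimes>\<^bsub>C\<^esub> (\<one>\<^bsub>H\<^esub>, g2)) = \<psi> (\<one>\<^bsub>H\<^esub>, g1) \<otimes>\<^bsub>C'\<^esub> \<psi> (\<one>\<^bsub>H\<^esub>, g2)"
      using that by (intro hm) auto
    have 2: "\<psi> ((f g1 g2, \<one>\<^bsub>G\<^esub>) \<otimes>\<^bsub>C\<^esub> (\<one>\<^bsub>H\<^esub>, g1 \<otimes>\<^bsub>G\<^esub> g2)) = \<psi> (f g1 g2, \<one>\<^bsub>G\<^esub>) \<otimes>\<^bsub>C'\<^esub> \<psi> (\<one>\<^bsub>H\<^esub>, g1 \<otimes>\<^bsub>G\<^esub> g2)"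
      using that by (intro hm) auto
    have A: "\<psi> (f g1 g2, g1 \<otimes>\<^bsub>G\<^esub> g2) = (r g1 \<otimes>\<^bsub>H\<^esub> \<alpha>' (v g1) (r g2) \<otimes>\<^bsub>H\<^esub> f' (v g1) (v g2), v g1 \<otimes>\<^bsub>G\<^esub> v g2)"
      using 1 that by (simp add: Pe Qe)
    have B: "\<psi> (f g1 g2, g1 \<otimes>\<^bsub>G\<^esub> g2) = (u (f g1 g2) \<otimes>\<^bsub>H\<^esub> \<alpha>' (s (f g1 g2)) (r (g1 \<otimes>\<^bsub>G\<^esub> g2))
            \<otimes>\<^bsub>H\<^esub> f' (s (f g1 g2)) (v (g1 \<otimes>\<^bsub>G\<^esub> g2)), s (f g1 g2) \<otimes>\<^bsub>G\<^esub> v (g1 \<otimes>\<^bsub>G\<^esub> g2))"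
      using 2 that by (simp add: Pe Qe)
    show ?thesis using trans[OF A[symmetric] B] by simp
  qed
  have shom: "s \<in> hom H G"
    by (rule homI) (simp_all add: e3)
  have ue: "u \<in> extensional (carrier H)" and se: "s \<in> extensional (carrier H)"
    and re: "r \<in> extensional (carrier G)" and ve: "v \<in> extensional (carrier G)"
    by (simp_all add: u_def s_def r_def v_def)
  have uP: "u \<in> carrier H \<rightarrow>\<^sub>E carrier H" using ue uc by (auto simp: PiE_def Pi_def)
  have rP: "r \<in> carrier G \<rightarrow>\<^sub>E carrier H" using re rc by (auto simp: PiE_def Pi_def)
  have vP: "v \<in> carrier G \<rightarrow>\<^sub>E carrier G" using ve vc by (auto simp: PiE_def Pi_def)
  have quad: "crossed_quadruple H G \<alpha> f \<alpha>' f' u r v s"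
    unfolding crossed_quadruple_def
    using shom uP rP vP se by (intro conjI ballI) (simp_all add: e3 e24 e15)
  have "F (u, r, v, s) = \<psi>"
  proof
    fix x
    show "F (u, r, v, s) x = \<psi> x"
    proof (cases "x \<in> carrier H \<times> carrier G")
      case True
      then obtain h g where x: "x = (h, g)" "h \<in> carrier H" "g \<in> carrier G" by auto
      have "\<psi> ((h, \<one>\<^bsub>G\<^esub>) \<otimes>\<^bsub>C\<^esub> (\<one>\<^bsub>H\<^esub>, g)) = \<psi> (h, \<one>\<^bsub>G\<^esub>) \<otimes>\<^bsub>C'\<^esub> \<psi> (\<one>\<^bsub>H\<^esub>, g)"
        using x by (intro hm) auto
      hence "\<psi> (h, g) = (u h \<otimes>\<^bsub>H\<^esub> \<alpha>' (s h) (r g) \<otimes>\<^bsub>H\<^esub> f' (s h) (v g), s h \<otimes>\<^bsub>G\<^esub> v g)"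
        using x by (simp add: Pe Qe)
      thus ?thesis using x by (simp add: F_app)
    next
      case False
      show ?thesis using extensional_arb[OF psi(2) False] extensional_arb[OF F_ext False] by simp
    qed
  qed
  with quad show ?thesis by simp
qed

end

theorem corollary2p3:
  fixes H :: "'h monoid" and G :: "'g monoid"
    and \<alpha> \<alpha>' :: "'g \<Rightarrow> 'h \<Rightarrow> 'h" and f f' :: "'g \<Rightarrow> 'g \<Rightarrow> 'h"
  assumes "normalized_crossed_system H G \<alpha> f"
    and "normalized_crossed_system H G \<alpha>' f'"
  shows "bij_betw (quadruple_to_hom H G \<alpha>' f')
           {(u, r, v, s). crossed_quadruple H G \<alpha> f \<alpha>' f' u r v s}
           (hom (crossed_product H G \<alpha> f) (crossed_product H G \<alpha>' f')
              \<inter> extensional (carrier H \<times> carrier G))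
       \<and> (\<forall>u r v s. crossed_quadruple H G \<alpha> f \<alpha>' f' u r v s \<longrightarrow>
            u \<one>\<^bsub>H\<^esub> = \<one>\<^bsub>H\<^esub> \<and> v \<one>\<^bsub>G\<^esub> = \<one>\<^bsub>G\<^esub> \<and> r \<one>\<^bsub>G\<^esub> = \<one>\<^bsub>H\<^esub>)"
proof -
  interpret two H G \<alpha> f \<alpha>' f'
    unfolding two_def ncs_def using assms by simp
  let ?A = "{(u, r, v, s). crossed_quadruple H G \<alpha> f \<alpha>' f' u r v s}"
  have inj: "inj_on F ?A"
  proof (rule inj_onI)
    fix q1 q2 assume q1: "q1 \<in> ?A" and q2: "q2 \<in> ?A" and eq: "F q1 = F q2"
    obtain u r v s where q1e: "q1 = (u, r, v, s)" by (cases q1) auto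
    obtain u' r' v' s' where q2e: "q2 = (u', r', v', s')" by (cases q2) auto
    have Q: "crossed_quadruple H G \<alpha> f \<alpha>' f' u r v s" using q1 q1e by simp
    have Q': "crossed_quadruple H G \<alpha> f \<alpha>' f' u' r' v' s'" using q2 q2e by simp
    have eqh: "(u h, s h) = (u' h, s' h)" if "h \<in> carrier H" for h
      using fun_cong[OF eq, of "(h, \<one>\<^bsub>G\<^esub>)"] F_h1[OF Q that] F_h1[OF Q' that] q1e q2e by simp
    have eqg: "(r g, v g) = (r' g, v' g)" if "g \<in> carrier G" for g
      using fun_cong[OF eq, of "(\<one>\<^bsub>H\<^esub>, g)"] F_1g[OF Q that] F_1g[OF Q' that] q1e q2e by simp
    have "u = u'" using uP[OF Q] uP[OF Q'] eqh by (intro extensionalityI[of _ "carrier H"]) (auto simp: PiE_def)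
    moreover have "s = s'" using se[OF Q] se[OF Q'] eqh by (intro extensionalityI[of _ "carrier H"]) auto
    moreover have "r = r'" using rP[OF Q] rP[OF Q'] eqg by (intro extensionalityI[of _ "carrier G"]) (auto simp: PiE_def)
    moreover have "v = v'" using vP[OF Q] vP[OF Q'] eqg by (intro extensionalityI[of _ "carrier G"]) (auto simp: PiE_def)
    ultimately show "q1 = q2" using q1e q2e by simp
  qed
  have img: "F ` ?A = hom C C' \<inter> extensional (carrier H \<times> carrier G)"
  proof
    show "F ` ?A \<subseteq> hom C C' \<inter> extensional (carrier H \<times> carrier G)"
      using quad_hom F_ext by auto
  next
    show "hom C C' \<inter> extensional (carrier H \<times> carrier G) \<subseteq> F ` ?A"
    proof
      fix \<psi> assume "\<psi> \<in> hom C C' \<inter> extensional (carrier H \<times> carrier G)"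
      then have p: "\<psi> \<in> hom C C'" "\<psi> \<in> extensional (carrier H \<times> carrier G)" by auto
      show "\<psi> \<in> F ` ?A"
      proof -
        let ?q = "(restrict (\<lambda>h. fst (\<psi> (h, \<one>\<^bsub>G\<^esub>))) (carrier H),
                  restrict (\<lambda>g. fst (\<psi> (\<one>\<^bsub>H\<^esub>, g))) (carrier G),
                  restrict (\<lambda>g. snd (\<psi> (\<one>\<^bsub>H\<^esub>, g))) (carrier G),
                  restrict (\<lambda>h. snd (\<psi> (h, \<one>\<^bsub>G\<^esub>))) (carrier H))"
        have "?q \<in> ?A" "F ?q = \<psi>" using hom_quad[OF p] by simp_all
        thus ?thesis by (intro rev_image_eqI[of ?q]) auto
      qed
    qed
  qed
  show ?thesis unfolding bij_betw_def using inj img u1 v1 r1 by blast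
qed

end
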